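(* Let $(X,*,0)$ be a solid branchwise implicative weak BCC-algebra. Then $X$ is branchwise positive implicative if and only if $X$ is a commutative BCK-algebra.
   Context: A weak BCC-algebra is a set $X$ with a binary operation $*$ and a constant $0$ satisfying, for all $x,y,z\in X$: (i) $((x*y)*(z*y))*(x*z)=0$; (ii) $x*x=0$; (iii) $x*0=x$; (iv) $x*y=y*x=0$ implies $x=y$. The relation $x\leqslant y$ iff $x*y=0$ is a partial order on $X$. Let $I(X)$ be the set of minimal elements of $X$ with respect to $\leqslant$. For $a\in I(X)$ the branch initiated by $a$ is $B(a)=\{x\in X: a\leqslant x\}$; "belonging to the same branch" means lying in a common $B(a)$. A weak BCC-algebra is called (left) solid if $(x*y)*z=(x*z)*y$ holds for all $x,y$ belonging to the same branch and all $z\in X$. It is branchwise implicative if $x*(y*x)=x$ for all $x,y$ in the same branch, and branchwise positive implicative if $(x*y)*y=x*y$ for all $x,y$ in the same branch. A BCK-algebra is a weak BCC-algebra satisfying $0*x=0$ and $(x*y)*z=(x*z)*y$ for all $x,y,z$; it is commutative if $x*(x*y)=y*(y*x)$ for all $x,y$. *)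

theory Defs
  imports Main
begin

text \<open>A weak BCC-algebra is given by a carrier set X, a binary operation m (written *),
and a constant e (written 0).  All axioms are relativised to the carrier.\<close>

definition weak_BCC :: "'a set \<Rightarrow> ('a \<Rightarrow> 'a \<Rightarrow> 'a) \<Rightarrow> 'a \<Rightarrow> bool" where
  "weak_BCC X m e \<longleftrightarrow>
     e \<in> X \<and> (\<forall>x\<in>X. \<forall>y\<in>X. m x y \<in> X) \<and>
     (\<forall>x\<in>X. \<forall>y\<in>X. \<forall>z\<in>X. m (m (m x y) (m z y)) (m x z) = e) \<and>
     (\<forall>x\<in>X. m x x = e) \<and>
     (\<forall>x\<in>X. m x e = x) \<and>
     (\<forall>x\<in>X. \<forall>y\<in>X. m x y = e \<and> m y x = e \<longrightarrow> x = y)"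

definition bcc_le :: "('a \<Rightarrow> 'a \<Rightarrow> 'a) \<Rightarrow> 'a \<Rightarrow> 'a \<Rightarrow> 'a \<Rightarrow> bool" where
  "bcc_le m e x y \<longleftrightarrow> m x y = e"

definition minimals :: "'a set \<Rightarrow> ('a \<Rightarrow> 'a \<Rightarrow> 'a) \<Rightarrow> 'a \<Rightarrow> 'a set" where
  "minimals X m e = {a \<in> X. \<forall>x\<in>X. bcc_le m e x a \<longrightarrow> x = a}"

definition branch :: "'a set \<Rightarrow> ('a \<Rightarrow> 'a \<Rightarrow> 'a) \<Rightarrow> 'a \<Rightarrow> 'a \<Rightarrow> 'a set" where
  "branch X m e a = {x \<in> X. bcc_le m e a x}"

definition same_branch :: "'a set \<Rightarrow> ('a \<Rightarrow> 'a \<Rightarrow> 'a) \<Rightarrow> 'a \<Rightarrow> 'a \<Rightarrow> 'a \<Rightarrow> bool" where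
  "same_branch X m e x y \<longleftrightarrow>
     (\<exists>a\<in>minimals X m e. x \<in> branch X m e a \<and> y \<in> branch X m e a)"

definition solid :: "'a set \<Rightarrow> ('a \<Rightarrow> 'a \<Rightarrow> 'a) \<Rightarrow> 'a \<Rightarrow> bool" where
  "solid X m e \<longleftrightarrow> weak_BCC X m e \<and>
     (\<forall>x\<in>X. \<forall>y\<in>X. \<forall>z\<in>X. same_branch X m e x y \<longrightarrow> m (m x y) z = m (m x z) y)"

definition branchwise_implicative :: "'a set \<Rightarrow> ('a \<Rightarrow> 'a \<Rightarrow> 'a) \<Rightarrow> 'a \<Rightarrow> bool" where
  "branchwise_implicative X m e \<longleftrightarrow>
     (\<forall>x\<in>X. \<forall>y\<in>X. same_branch X m e x y \<longrightarrow> m x (m y x) = x)"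

definition branchwise_positive_implicative :: "'a set \<Rightarrow> ('a \<Rightarrow> 'a \<Rightarrow> 'a) \<Rightarrow> 'a \<Rightarrow> bool" where
  "branchwise_positive_implicative X m e \<longleftrightarrow>
     (\<forall>x\<in>X. \<forall>y\<in>X. same_branch X m e x y \<longrightarrow> m (m x y) y = m x y)"

definition BCK :: "'a set \<Rightarrow> ('a \<Rightarrow> 'a \<Rightarrow> 'a) \<Rightarrow> 'a \<Rightarrow> bool" where
  "BCK X m e \<longleftrightarrow> weak_BCC X m e \<and> (\<forall>x\<in>X. m e x = e) \<and>
     (\<forall>x\<in>X. \<forall>y\<in>X. \<forall>z\<in>X. m (m x y) z = m (m x z) y)"

definition commutative_BCK :: "'a set \<Rightarrow> ('a \<Rightarrow> 'a \<Rightarrow> 'a) \<Rightarrow> 'a \<Rightarrow> bool" where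
  "commutative_BCK X m e \<longleftrightarrow> BCK X m e \<and>
     (\<forall>x\<in>X. \<forall>y\<in>X. m x (m x y) = m y (m y x))"

end

theory Submission
  imports Defs
begin

locale wb = fixes X m e
  assumes e: "e \<in> X" and cl: "\<And>x y. x\<in>X \<Longrightarrow> y\<in>X \<Longrightarrow> m x y \<in> X"
  and a1: "\<And>x y z. x\<in>X \<Longrightarrow> y\<in>X \<Longrightarrow> z\<in>X \<Longrightarrow> m (m (m x y) (m z y)) (m x z) = e"
  and a2: "\<And>x. x\<in>X \<Longrightarrow> m x x = e"
  and a3: "\<And>x. x\<in>X \<Longrightarrow> m x e = x"
  and a4: "\<And>x y. x\<in>X \<Longrightarrow> y\<in>X \<Longrightarrow> m x y = e \<Longrightarrow> m y x = e \<Longrightarrow> x = y"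
begin
lemma b1: "x\<in>X \<Longrightarrow> m (m e (m e x)) x = e"
  by (metis a1 a3 e)
lemma am: "x\<in>X \<Longrightarrow> y\<in>X \<Longrightarrow> z\<in>X \<Longrightarrow> m y z = e \<Longrightarrow> m (m x z) (m x y) = e"
  by (metis a1 a3 cl)
lemma b3: "x\<in>X \<Longrightarrow> y\<in>X \<Longrightarrow> m y x = e \<Longrightarrow> m e y = m e x"
  by (smt (verit, del_insts) a1 a3 a4 b1 cl)
lemma b2: assumes x: "x\<in>X" shows "m e (m e (m e x)) = m e x"
proof -
  have 1: "m (m e (m e (m e x))) (m e x) = e" using b1[OF cl[OF e x]] .
  have 2: "m (m e x) (m e (m e (m e x))) = e"
    using am[OF e cl[OF e cl[OF e x]] x b1[OF x]] .
  show ?thesis using a4[OF cl[OF e cl[OF e cl[OF e x]]] cl[OF e x] 1 2] .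
qed
lemma minimal: assumes x: "x\<in>X" shows "m e (m e x) \<in> minimals X m e"
proof -
  let ?a = "m e (m e x)"
  have aX: "?a \<in> X" by (intro cl e x)
  have "y = ?a" if y: "y \<in> X" "m y ?a = e" for y
  proof -
    have "m e y = m e ?a" using b3[OF aX y(1) y(2)] .
    hence "m e (m e y) = m e (m e ?a)" by simp
    also have "\<dots> = ?a" using b2[OF cl[OF e x]] by simp
    finally have "m ?a y = e" using b1[OF y(1)] by simp
    thus ?thesis using a4[OF aX y(1) _ y(2)] by simp
  qed
  thus ?thesis using aX unfolding minimals_def bcc_le_def by blast
qed
lemma inbranch: "x\<in>X \<Longrightarrow> x \<in> branch X m e (m e (m e x))"
  unfolding branch_def bcc_le_def using b1 by blast
lemma sb_self: assumes x: "x\<in>X" shows "same_branch X m e (m e (m e x)) x"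
proof -
  have aX: "m e (m e x) \<in> X" by (intro cl e x)
  have "m e (m e x) \<in> branch X m e (m e (m e x))"
    using aX a2[OF aX] unfolding branch_def bcc_le_def by blast
  thus ?thesis unfolding same_branch_def using minimal[OF x] inbranch[OF x] by blast
qed
lemma univ_sb: assumes "\<forall>x\<in>X. m e x = e" shows "\<forall>x\<in>X. \<forall>y\<in>X. same_branch X m e x y"
proof -
  have "e \<in> minimals X m e" using e a3 unfolding minimals_def bcc_le_def by auto
  thus ?thesis using assms unfolding same_branch_def branch_def bcc_le_def by blast
qed
end

locale bck = fixes X m e
  assumes e: "e \<in> X" and cl: "\<And>x y. x\<in>X \<Longrightarrow> y\<in>X \<Longrightarrow> m x y \<in> X"
  and a1: "\<And>x y z. x\<in>X \<Longrightarrow> y\<in>X \<Longrightarrow> z\<in>X \<Longrightarrow> m (m (m x y) (m z y)) (m x z) = e"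
  and a2: "\<And>x. x\<in>X \<Longrightarrow> m x x = e"
  and a3: "\<And>x. x\<in>X \<Longrightarrow> m x e = x"
  and a4: "\<And>x y. x\<in>X \<Longrightarrow> y\<in>X \<Longrightarrow> m x y = e \<Longrightarrow> m y x = e \<Longrightarrow> x = y"
  and z: "\<And>x. x\<in>X \<Longrightarrow> m e x = e"
  and ex: "\<And>x y z. x\<in>X \<Longrightarrow> y\<in>X \<Longrightarrow> z\<in>X \<Longrightarrow> m (m x y) z = m (m x z) y"
  and imp: "\<And>x y. x\<in>X \<Longrightarrow> y\<in>X \<Longrightarrow> m x (m y x) = x"
begin
lemma le1: assumes x: "x\<in>X" and y: "y\<in>X" shows "m (m x y) x = e"
  using ex[OF x y x] a2[OF x] z[OF y] by simp
lemma le2: "x\<in>X \<Longrightarrow> y\<in>X \<Longrightarrow> m (m x (m x y)) y = e"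
  by (metis a2 cl ex)
lemma am: "x\<in>X \<Longrightarrow> y\<in>X \<Longrightarrow> z\<in>X \<Longrightarrow> m y z = e \<Longrightarrow> m (m x z) (m x y) = e"
  by (metis a1 a3 cl)
lemma L: assumes u: "u\<in>X" and y: "y\<in>X" and uy: "m u y = e" shows "m y (m y u) = u"
proof -
  have yu: "m y u \<in> X" by (intro cl u y)
  have yyu: "m y (m y u) \<in> X" by (intro cl yu y)
  have 1: "m (m y (m y u)) u = m (m y u) (m y u)" using ex[OF y yu u] .
  hence 1: "m (m y (m y u)) u = e" using a2[OF yu] by simp
  have "m (m (m u (m y u)) (m y (m y u))) (m u y) = e" using a1[OF u yu y] .
  hence 2: "m u (m y (m y u)) = e" using imp[OF u y] uy a3[OF cl[OF u yyu]] by simp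
  show ?thesis using a4[OF yyu u 1 2] .
qed
lemma c1: assumes x: "x\<in>X" and y: "y\<in>X" shows "m (m x (m x y)) (m y (m y x)) = e"
proof -
  let ?u = "m x (m x y)"
  have u: "?u \<in> X" by (intro cl x y)
  have uy: "m ?u y = e" using le2[OF x y] .
  have ux: "m ?u x = e" using le1[OF x cl[OF x y]] .
  have eq: "m y (m y ?u) = ?u" using L[OF u y uy] .
  have 1: "m (m y x) (m y ?u) = e" using am[OF y u x ux] .
  have 2: "m (m y (m y ?u)) (m y (m y x)) = e"
    using am[OF y cl[OF y x] cl[OF y u] 1] .
  show ?thesis using 2 eq by simp
qed
lemma comm: assumes x: "x\<in>X" and y: "y\<in>X" shows "m x (m x y) = m y (m y x)"
  using a4[OF cl[OF x cl[OF x y]] cl[OF y cl[OF y x]] c1[OF x y] c1[OF y x]] .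
lemma pi: "x\<in>X \<Longrightarrow> y\<in>X \<Longrightarrow> m (m x y) y = m x y"
  by (metis cl imp)
end

theorem theorem3p9:
  fixes X :: "'a set" and m :: "'a \<Rightarrow> 'a \<Rightarrow> 'a" and e :: 'a
  assumes "weak_BCC X m e" and "solid X m e" and "branchwise_implicative X m e"
  shows "branchwise_positive_implicative X m e \<longleftrightarrow> commutative_BCK X m e"
proof -
  interpret wb X m e using assms(1) unfolding weak_BCC_def by (intro wb.intro) blast+
  show ?thesis
  proof
    assume pi: "branchwise_positive_implicative X m e"
    have zz: "\<forall>x\<in>X. m e x = e"
    proof
      fix x assume x: "x \<in> X"
      let ?a = "m e (m e x)"
      have aX: "?a \<in> X" by (intro cl e x)
      have ax: "m ?a x = e" using b1[OF x] .
      have "m (m ?a x) x = m ?a x" using pi sb_self[OF x] aX x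
        unfolding branchwise_positive_implicative_def by blast
      thus "m e x = e" using ax by simp
    qed
    note sb = univ_sb[OF zz]
    have z': "\<And>x. x\<in>X \<Longrightarrow> m e x = e" using zz by blast
    have exch: "\<And>x y w. x\<in>X \<Longrightarrow> y\<in>X \<Longrightarrow> w\<in>X \<Longrightarrow> m (m x y) w = m (m x w) y"
      using assms(2) sb unfolding solid_def by blast
    have im: "\<And>x y. x\<in>X \<Longrightarrow> y\<in>X \<Longrightarrow> m x (m y x) = x"
      using assms(3) sb unfolding branchwise_implicative_def by blast
    interpret bck X m e
      using z' by (intro bck.intro[OF e cl a1 a2 a3 a4 _ exch im]) blast
    have c1: "\<forall>x\<in>X. \<forall>y\<in>X. \<forall>w\<in>X. m (m x y) w = m (m x w) y"
      using exch by blast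
    have c2: "\<forall>x\<in>X. \<forall>y\<in>X. m x (m x y) = m y (m y x)"
      using comm by blast
    show "commutative_BCK X m e"
      unfolding commutative_BCK_def BCK_def using assms(1) zz c1 c2 by (intro conjI)
  next
    assume c: "commutative_BCK X m e"
    have zz: "\<forall>x\<in>X. m e x = e" using c unfolding commutative_BCK_def BCK_def by blast
    note sb = univ_sb[OF zz]
    have z': "\<And>x. x\<in>X \<Longrightarrow> m e x = e" using zz by blast
    have exch: "\<And>x y w. x\<in>X \<Longrightarrow> y\<in>X \<Longrightarrow> w\<in>X \<Longrightarrow> m (m x y) w = m (m x w) y"
      using c unfolding commutative_BCK_def BCK_def by blast
    have im: "\<And>x y. x\<in>X \<Longrightarrow> y\<in>X \<Longrightarrow> m x (m y x) = x"
      using assms(3) sb unfolding branchwise_implicative_def by blast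
    interpret bck X m e
      using z' by (intro bck.intro[OF e cl a1 a2 a3 a4 _ exch im]) blast
    show "branchwise_positive_implicative X m e"
      unfolding branchwise_positive_implicative_def
    proof (intro ballI impI)
      fix x y assume "x \<in> X" "y \<in> X"
      thus "m (m x y) y = m x y" by (rule pi)
    qed
  qed
qed

end
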